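(* Suppose the gain matrix $V$ is irreducible. Then the max-min SIR-balancing problem $\max_{p\in\mathcal P}\min_{k\in\mathcal K}\mathrm{SIR}_k(p)/\gamma_k$ has a unique maximizer $\bar p$, and $\bar p=\bar p'$, where $\bar p'=(\frac{1}{t'}I-\Gamma V)^{-1}\Gamma z$ and $t'$ is the largest $t>0$ for which there exists $p\in\mathcal P$ with $(\frac1t I-\Gamma V)p=\Gamma z$. In particular $\bar p>0$.
   Context: Network model: $K\ge 2$ links, $\mathcal K=\{1,\dots,K\}$. Power constraint set $\mathcal P=\{p\in\mathbb R_+^K: Cp\le\hat p\}$, where $C\in\{0,1\}^{N\times K}$ has at least one entry equal to $1$ in each column and $\hat p=(P_1,\dots,P_N)\in\mathbb R_{++}^N$. Gain matrix $V\in\mathbb R_+^{K\times K}$ with zero diagonal, noise vector $z\in\mathbb R_{++}^K$, $\mathrm{SIR}_k(p)=p_k/((Vp)_k+z_k)$. SIR targets $\gamma_1,\dots,\gamma_K>0$ and $\Gamma=\mathrm{diag}(\gamma_1,\dots,\gamma_K)$. *)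

theory Defs
  imports "HOL-Analysis.Analysis"
begin

text \<open>Links are indexed by a finite type 'k (so K = CARD('k)); power constraints
by a finite type 'n (so N = CARD('n)). Vectors are real^'k, matrices real^'k^'k.\<close>

definition SIR :: "real^'k^'k \<Rightarrow> real^'k \<Rightarrow> real^'k \<Rightarrow> 'k \<Rightarrow> real" where
  "SIR V z p k = p $ k / ((V *v p) $ k + z $ k)"

definition balance_obj :: "real^'k^'k \<Rightarrow> real^'k \<Rightarrow> real^'k \<Rightarrow> real^'k::finite \<Rightarrow> real" where
  "balance_obj V z gamma p = Min (range (\<lambda>k. SIR V z p k / gamma $ k))"

definition power_set :: "real^'k^'n \<Rightarrow> real^'n \<Rightarrow> (real^'k) set" where
  "power_set C phat = {p. (\<forall>k. 0 \<le> p $ k) \<and> (\<forall>i. (C *v p) $ i \<le> phat $ i)}"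

definition diag_mat :: "real^'k \<Rightarrow> real^'k^'k" where
  "diag_mat g = (\<chi> i j. if i = j then g $ i else 0)"

text \<open>Irreducibility of a nonnegative square matrix: its directed graph
(edge i -> j iff V_ij > 0) is strongly connected.\<close>
definition irreducible_mat :: "real^'k^'k \<Rightarrow> bool" where
  "irreducible_mat V \<longleftrightarrow> (\<forall>i j. (i, j) \<in> {(a, b). V $ a $ b > 0}\<^sup>+)"

end

theory Submission
  imports Defs
begin


lemma diag_mv: "(diag_mat g *v y) $ k = g$k * y$k"
  unfolding diag_mat_def matrix_vector_mult_def
  by (simp add: if_distrib[of "\<lambda>u. u * _"] cong: if_cong)

lemma Mv: "(((1/t) *\<^sub>R mat 1 - diag_mat g ** V) *v x) $ k = x$k / t - g$k * (V *v x)$k"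
  by (simp add: matrix_vector_mult_diff_rdistrib scaleR_matrix_vector_assoc[symmetric]
        matrix_vector_mul_assoc[symmetric] diag_mv)

lemma Vnonneg: "(\<forall>i j. V $ i $ j \<ge> (0::real)) \<Longrightarrow> (\<forall>j. x$j \<ge> 0) \<Longrightarrow> (V *v x)$k \<ge> 0"
  unfolding matrix_vector_mult_def by (simp add: sum_nonneg)

lemma Vneg: "(V *v (-x)) $ k = - ((V *v x) $ k :: real)"
  unfolding matrix_vector_mult_def by (simp add: sum_negf)

lemma Vdiff: "(V *v (x - y)) $ k = (V *v x) $ k - ((V *v y) $ k :: real)"
  by (simp add: matrix_vector_mult_diff_distrib)

lemma Vscale: "(V *v (c *\<^sub>R x)) $ k = c * ((V *v x) $ k :: real)"
  by (simp add: matrix_vector_mult_scaleR)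

lemma inv_mv: assumes "invertible (A::real^'n^'n)" shows "A *v (matrix_inv A *v y) = y"
proof -
  have "A ** matrix_inv A = mat 1" using assms unfolding invertible_def matrix_inv_def
    by (rule someI2_ex) auto
  thus ?thesis by (metis matrix_vector_mul_assoc matrix_vector_mul_lid)
qed

lemma inj_invertible: fixes A :: "real^'n^'n" assumes "\<And>x. A *v x = 0 \<Longrightarrow> x = 0" shows "invertible A"
  using assms matrix_left_invertible_ker invertible_left_inverse by blast

lemma mono_lemma:
  fixes V :: "real^'k::finite^'k"
  assumes Vnn: "\<forall>i j. V$i$j \<ge> 0" and g: "\<forall>k. gamma$k > 0" and zp: "\<forall>k. z$k > 0" and t: "t > 0"
    and p0: "\<forall>k. p$k \<ge> 0" and p: "\<forall>k. p$k \<ge> t * gamma$k * ((V *v p)$k + z$k)"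
    and x: "\<forall>k. x$k \<ge> t * gamma$k * (V *v x)$k"
  shows "x$k \<ge> 0"
proof (rule ccontr)
  assume neg: "\<not> x$k \<ge> 0"
  have ppos: "p$j > 0" for j
  proof -
    have "(V *v p)$j \<ge> 0" using Vnn p0 by (rule Vnonneg)
    hence "(V *v p)$j + z$j > 0" using zp[rule_format, of j] by linarith
    hence "t * gamma$j * ((V *v p)$j + z$j) > 0" using t g[rule_format, of j] by simp
    thus ?thesis using p[rule_format, of j] by linarith
  qed
  define f where "f j = - x$j / p$j" for j
  define s where "s = Max (range f)"
  have "x$k / p$k < 0" using neg ppos[of k] by (intro divide_neg_pos) auto
  hence fk: "f k > 0" unfolding f_def by simp
  have fle: "f j \<le> s" for j unfolding s_def by simp
  have spos: "s > 0" using fk fle[of k] by linarith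
  have "s \<in> range f" unfolding s_def by (rule Max_in) auto
  then obtain k0 where k0: "f k0 = s" by auto
  define y where "y = x + s *\<^sub>R p"
  have y0: "y$j \<ge> 0" for j
  proof -
    have "- x$j / p$j \<le> s" using fle[of j] unfolding f_def .
    hence "- x$j \<le> s * p$j" using ppos[of j] by (simp only: pos_divide_le_eq)
    thus ?thesis unfolding y_def by simp
  qed
  have yk0: "y$k0 = 0"
  proof -
    have "- x$k0 / p$k0 = s" using k0 unfolding f_def .
    hence "- x$k0 = s * p$k0" using ppos[of k0] by (auto simp: field_simps)
    thus ?thesis unfolding y_def by simp
  qed
  have Vy: "(V *v y)$k0 = (V *v x)$k0 + s * (V *v p)$k0"
    unfolding y_def by (simp add: matrix_vector_right_distrib Vscale)
  have Vy0: "(V *v y)$k0 \<ge> 0" using Vnn y0 by (simp add: Vnonneg)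
  have "y$k0 = x$k0 + s * p$k0" unfolding y_def by simp
  also have "\<dots> \<ge> t * gamma$k0 * (V *v x)$k0 + s * (t * gamma$k0 * ((V *v p)$k0 + z$k0))"
  proof (rule add_mono)
    show "t * gamma$k0 * (V *v x)$k0 \<le> x$k0" using x by blast
    show "s * (t * gamma$k0 * ((V *v p)$k0 + z$k0)) \<le> s * p$k0"
      using p[rule_format, of k0] spos by (intro mult_left_mono) auto
  qed
  finally have "y$k0 \<ge> t * gamma$k0 * (V *v y)$k0 + s * t * gamma$k0 * z$k0"
    using Vy by (simp add: algebra_simps)
  moreover have "t * gamma$k0 * (V *v y)$k0 \<ge> 0" using t g[rule_format, of k0] Vy0 by simp
  moreover have "s * t * gamma$k0 * z$k0 > 0" using spos t g[rule_format, of k0] zp[rule_format, of k0] by simp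
  ultimately show False using yk0 by linarith
qed

lemma irr_lemma:
  fixes V :: "real^'k::finite^'k"
  assumes Vnn: "\<forall>i j. V$i$j \<ge> 0" and g: "\<forall>k. gamma$k > 0" and t: "t > 0"
    and irr: "irreducible_mat V"
    and x0: "\<forall>k. x$k \<ge> 0" and x: "\<forall>k. x$k \<ge> t * gamma$k * (V *v x)$k + c$k"
    and c0: "\<forall>k. c$k \<ge> 0" and cm: "c$m > 0"
  shows "x$k > 0"
proof (rule ccontr)
  assume "\<not> x$k > 0"
  hence xk: "x$k = 0" using x0[rule_format, of k] by linarith
  have step: "x$j = 0" if "x$i = 0" "V$i$j > 0" for i j
  proof -
    have "(V *v x)$i = (\<Sum>l\<in>UNIV. V$i$l * x$l)" by (simp add: matrix_vector_mult_def)
    also have "\<dots> \<ge> V$i$j * x$j"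
      by (rule member_le_sum) (use Vnn x0 in auto)
    finally have a: "(V *v x)$i \<ge> V$i$j * x$j" .
    have "0 \<ge> t * gamma$i * (V *v x)$i + c$i" using x[rule_format, of i] that(1) by simp
    moreover have "t * gamma$i * (V *v x)$i \<ge> t * gamma$i * (V$i$j * x$j)"
      using a t g by (simp add: less_imp_le)
    moreover have "V$i$j * x$j \<ge> 0" using that(2) x0 by simp
    moreover have "t * gamma$i > 0" using t g by simp
    ultimately have "t * gamma$i * (V$i$j * x$j) \<le> 0" using c0[rule_format, of i] by linarith
    hence "V$i$j * x$j \<le> 0" using \<open>t * gamma$i > 0\<close> using mult_pos_pos[OF \<open>t * gamma$i > 0\<close>, of "V$i$j * x$j"] by linarith
    thus ?thesis using mult_pos_pos[OF that(2), of "x$j"] x0[rule_format, of j] by linarith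
  qed
  have "(k, m) \<in> {(a, b). V $ a $ b > 0}\<^sup>+" using irr unfolding irreducible_mat_def by blast
  hence "x$m = 0"
  proof (induction rule: trancl_induct)
    case (base y) thus ?case using step xk by auto
  next
    case (step y w) thus ?case using \<open>\<And>i j. x$i = 0 \<Longrightarrow> V$i$j > 0 \<Longrightarrow> x$j = 0\<close> by auto
  qed
  moreover have "x$m > 0"
  proof -
    have "(V *v x)$m \<ge> 0" using Vnn x0 by (simp add: Vnonneg)
    hence "t * gamma$m * (V *v x)$m \<ge> 0" using t g[rule_format, of m] by simp
    thus ?thesis using x[rule_format, of m] cm by linarith
  qed
  ultimately show False by simp
qed



lemma obj_ge:
  fixes V :: "real^'k::finite^'k"
  assumes Vnn: "\<forall>i j. V$i$j \<ge> 0" and g: "\<forall>k. gamma$k > 0" and zp: "\<forall>k. z$k > 0"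
    and p0: "\<forall>k. p$k \<ge> 0"
  shows "t \<le> balance_obj V z gamma p \<longleftrightarrow> (\<forall>k. p$k \<ge> t * gamma$k * ((V *v p)$k + z$k))"
    and "t < balance_obj V z gamma p \<longleftrightarrow> (\<forall>k. p$k > t * gamma$k * ((V *v p)$k + z$k))"
proof -
  have D: "(V *v p)$k + z$k > 0" for k using Vnonneg[OF Vnn p0, of k] zp[rule_format, of k] by linarith
  have e1: "t \<le> SIR V z p k / gamma$k \<longleftrightarrow> p$k \<ge> t * gamma$k * ((V *v p)$k + z$k)" for k
    using D[of k] g[rule_format, of k] unfolding SIR_def
    by (simp add: pos_le_divide_eq mult.assoc mult.commute[of "gamma$k"])
  have e2: "t < SIR V z p k / gamma$k \<longleftrightarrow> p$k > t * gamma$k * ((V *v p)$k + z$k)" for k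
    using D[of k] g[rule_format, of k] unfolding SIR_def
    by (simp add: pos_less_divide_eq mult.assoc mult.commute[of "gamma$k"])
  show "t \<le> balance_obj V z gamma p \<longleftrightarrow> (\<forall>k. p$k \<ge> t * gamma$k * ((V *v p)$k + z$k))"
    unfolding balance_obj_def using e1 by (simp add: Min_ge_iff)
  show "t < balance_obj V z gamma p \<longleftrightarrow> (\<forall>k. p$k > t * gamma$k * ((V *v p)$k + z$k))"
    unfolding balance_obj_def using e2 by (simp add: Min_gr_iff)
qed

lemma cont_Min:
  assumes "finite A" "A \<noteq> {}" "\<forall>k\<in>A. continuous_on S (f k)"
  shows "continuous_on S (\<lambda>p. Min ((\<lambda>k. f k p) ` A) :: real)"
  using assms
proof (induction A rule: finite_ne_induct)
  case (singleton x) thus ?case by simp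
next
  case (insert a A)
  have "continuous_on S (\<lambda>p. min (f a p) (Min ((\<lambda>k. f k p) ` A)))"
    using insert by (intro continuous_on_min) auto
  thus ?case using insert by simp
qed

lemma obj_cont:
  fixes V :: "real^'k::finite^'k"
  assumes Vnn: "\<forall>i j. V$i$j \<ge> 0" and zp: "\<forall>k. z$k > 0" and g: "\<forall>k. gamma$k > 0"
    and S: "\<forall>p\<in>S. \<forall>k. p$k \<ge> 0"
  shows "continuous_on S (balance_obj V z gamma)"
proof -
  have "continuous_on S (\<lambda>p. SIR V z p k / gamma$k)" for k
    unfolding SIR_def
  proof (intro continuous_intros)
    show "\<forall>x\<in>S. (V *v x) $ k + z $ k \<noteq> 0"
      proof
      fix x assume "x \<in> S"
      hence "(V *v x)$k \<ge> 0" using S Vnonneg[OF Vnn] by blast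
      thus "(V *v x) $ k + z $ k \<noteq> 0" using zp[rule_format, of k] by linarith
    qed
    show "\<forall>x\<in>S. gamma $ k \<noteq> 0" using g by (metis less_irrefl)
  qed
  hence "continuous_on S (\<lambda>p. Min ((\<lambda>k. SIR V z p k / gamma$k) ` UNIV))"
    by (intro cont_Min) auto
  thus ?thesis unfolding balance_obj_def by simp
qed

lemma P_compact:
  fixes C :: "real^'k::finite^'n::finite"
  assumes C01: "\<forall>i k. C $ i $ k = 0 \<or> C $ i $ k = 1"
    and Ccol: "\<forall>k. \<exists>i. C $ i $ k = 1"
    and phat_pos: "\<forall>i. phat $ i > 0"
  shows "compact (power_set C phat)"
proof -
  have cl: "closed (power_set C phat)"
    unfolding power_set_def
    by (intro closed_Collect_all closed_Collect_conj closed_Collect_le continuous_intros)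
  define B where "B = (\<Sum>i\<in>UNIV. phat$i)"
  have "power_set C phat \<subseteq> cbox 0 (\<chi> k. B)"
  proof
    fix p assume p: "p \<in> power_set C phat"
    show "p \<in> cbox 0 (\<chi> k. B)" unfolding mem_box_cart
    proof
      fix k
      obtain i where i: "C$i$k = 1" using Ccol by blast
      have Cnn: "\<forall>i j. C$i$j \<ge> 0" using C01 by (metis order_refl zero_le_one)
      have p0: "\<forall>k. p$k \<ge> 0" using p unfolding power_set_def by auto
      have "p$k = C$i$k * p$k" using i by simp
      also have "\<dots> \<le> (\<Sum>j\<in>UNIV. C$i$j * p$j)"
        by (rule member_le_sum) (use Cnn p0 in \<open>auto intro: mult_nonneg_nonneg\<close>)
      also have "\<dots> = (C *v p)$i" by (simp add: matrix_vector_mult_def)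
      also have "\<dots> \<le> phat$i" using p unfolding power_set_def by auto
      also have "\<dots> \<le> B" unfolding B_def
        by (rule member_le_sum) (use phat_pos in \<open>auto intro: less_imp_le\<close>)
      finally show "0$k \<le> p$k \<and> p$k \<le> (\<chi> k. B)$k" using p0 by simp
    qed
  qed
  hence "bounded (power_set C phat)" using bounded_cbox bounded_subset by blast
  thus ?thesis using cl compact_eq_bounded_closed by blast
qed



lemma eqconv: "(t::real) > 0 \<Longrightarrow> (x / t - g * v = g * w) \<longleftrightarrow> (x = t * g * (v + w))"
  by (auto simp: field_simps)

lemma Meq:
  fixes V :: "real^'k::finite^'k"
  assumes "t > 0"
  shows "((1 / t) *\<^sub>R mat 1 - diag_mat gamma ** V) *v p = diag_mat gamma *v z \<longleftrightarrow>
         (\<forall>k. p$k = t * gamma$k * ((V *v p)$k + z$k))"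
  using eqconv[OF assms] by (simp add: vec_eq_iff Mv diag_mv)

theorem mainTheorem2:
  fixes C :: "real^'k::finite^'n::finite"
    and phat :: "real^'n"
    and V :: "real^'k^'k"
    and z :: "real^'k"
    and gamma :: "real^'k"
  assumes K2: "CARD('k) \<ge> 2"
    and C01: "\<forall>i k. C $ i $ k = 0 \<or> C $ i $ k = 1"
    and Ccol: "\<forall>k. \<exists>i. C $ i $ k = 1"
    and phat_pos: "\<forall>i. phat $ i > 0"
    and V_nonneg: "\<forall>i j. V $ i $ j \<ge> 0"
    and V_diag: "\<forall>k. V $ k $ k = 0"
    and z_pos: "\<forall>k. z $ k > 0"
    and gamma_pos: "\<forall>k. gamma $ k > 0"
    and V_irr: "irreducible_mat V"
  shows "\<exists>pbar.
           (pbar \<in> power_set C phat \<and>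
            (\<forall>p \<in> power_set C phat. balance_obj V z gamma p \<le> balance_obj V z gamma pbar)) \<and>
           (\<forall>q. q \<in> power_set C phat \<and>
                (\<forall>p \<in> power_set C phat. balance_obj V z gamma p \<le> balance_obj V z gamma q)
                \<longrightarrow> q = pbar) \<and>
           (\<exists>t'. t' > 0 \<and>
                 (\<exists>p \<in> power_set C phat.
                    ((1 / t') *\<^sub>R mat 1 - diag_mat gamma ** V) *v p = diag_mat gamma *v z) \<and>
                 (\<forall>t. t > 0 \<and> (\<exists>p \<in> power_set C phat.
                        ((1 / t) *\<^sub>R mat 1 - diag_mat gamma ** V) *v p = diag_mat gamma *v z)
                      \<longrightarrow> t \<le> t') \<and>
                 invertible ((1 / t') *\<^sub>R mat 1 - diag_mat gamma ** V) \<and>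
                 pbar = matrix_inv ((1 / t') *\<^sub>R mat 1 - diag_mat gamma ** V) *v (diag_mat gamma *v z)) \<and>
           (\<forall>k. pbar $ k > 0)"
proof -
  define P where "P = power_set C phat"
  define obj where "obj = balance_obj V z gamma"
  have P0: "\<forall>p\<in>P. \<forall>k. p$k \<ge> 0" unfolding P_def power_set_def by auto
  have Cnn: "\<forall>i j. C$i$j \<ge> 0" using C01 by (metis order_refl zero_le_one)
  have "0 \<in> P" unfolding P_def power_set_def using phat_pos by (auto intro: less_imp_le)
  then obtain ps where ps: "ps \<in> P" and psmax: "\<forall>p\<in>P. obj p \<le> obj ps"
    using continuous_attains_sup[OF P_compact[OF C01 Ccol phat_pos], of obj]
      obj_cont[OF V_nonneg z_pos gamma_pos, of P] P0 unfolding P_def obj_def by blast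
  define ts where "ts = obj ps"
  define d where "d = Min (range (\<lambda>i. phat$i)) / real CARD('k)"
  have minpos: "Min (range (\<lambda>i. phat$i)) > 0" using phat_pos by (simp add: Min_gr_iff)
  have dpos: "d > 0" unfolding d_def using minpos by simp
  define p0 :: "real^'k" where "p0 = (\<chi> k. d)"
  have p0P: "p0 \<in> P" unfolding P_def power_set_def
  proof (safe)
    fix k show "0 \<le> p0 $ k" using dpos unfolding p0_def by simp
  next
    fix i
    have "(C *v p0)$i = (\<Sum>j\<in>UNIV. C$i$j * d)" unfolding p0_def by (simp add: matrix_vector_mult_def)
    also have "\<dots> \<le> (\<Sum>j\<in>(UNIV::'k set). d)"
      proof (rule sum_mono)
      fix j
      have "C$i$j = 0 \<or> C$i$j = 1" using C01 by blast
      thus "C$i$j * d \<le> d" using dpos by auto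
    qed
    also have "\<dots> = Min (range (\<lambda>i. phat$i))" unfolding d_def by simp
    also have "\<dots> \<le> phat$i" by simp
    finally show "(C *v p0)$i \<le> phat$i" .
  qed
  have "obj p0 > 0" unfolding obj_def
    using obj_ge(2)[OF V_nonneg gamma_pos z_pos, of p0 0] dpos unfolding p0_def by simp
  hence tspos: "ts > 0" using psmax p0P unfolding ts_def by (meson less_le_trans)
  have psge: "\<forall>k. ps$k \<ge> ts * gamma$k * ((V *v ps)$k + z$k)"
    using obj_ge(1)[OF V_nonneg gamma_pos z_pos, of ps ts] P0 ps unfolding ts_def obj_def by simp
  have mono: "\<And>x. \<forall>k. x$k \<ge> ts * gamma$k * (V *v x)$k \<Longrightarrow> \<forall>k. x$k \<ge> 0"
    using mono_lemma[OF V_nonneg gamma_pos z_pos tspos _ psge] P0 ps by blast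
  define M where "M = (1 / ts) *\<^sub>R mat 1 - diag_mat gamma ** V"
  have invM: "invertible M"
  proof (rule inj_invertible)
    fix x assume "M *v x = 0"
    hence e: "\<forall>k. x$k = ts * gamma$k * (V *v x)$k"
      unfolding M_def using eqconv[OF tspos, where w = 0] by (simp add: vec_eq_iff Mv)
    have "\<forall>k. x$k \<ge> 0"
    proof (rule mono, rule allI)
      fix k show "ts * gamma$k * (V *v x)$k \<le> x$k" using e[rule_format, of k] by linarith
    qed
    moreover have "\<forall>k. (-x)$k \<ge> 0" using mono[of "-x"] e by (simp add: Vneg)
    ultimately show "x = 0" by (simp add: vec_eq_iff order_antisym)
  qed
  define q where "q = matrix_inv M *v (diag_mat gamma *v z)"
  have qeq: "\<forall>k. q$k = ts * gamma$k * ((V *v q)$k + z$k)"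
    using inv_mv[OF invM] Meq[OF tspos] unfolding q_def M_def by blast
  have q0: "\<forall>k. q$k \<ge> 0"
  proof (rule mono, rule allI)
    fix k
    have "ts * gamma$k * z$k > 0" using tspos gamma_pos z_pos by simp
    thus "q$k \<ge> ts * gamma$k * (V *v q)$k" using qeq by (simp add: algebra_simps)
  qed
  have qpos: "\<forall>k. q$k > 0"
  proof
    fix k
    have "(V *v q)$k + z$k > 0" using Vnonneg[OF V_nonneg q0, of k] z_pos[rule_format, of k] by linarith
    thus "q$k > 0" using qeq tspos gamma_pos by simp
  qed
  have core: "p = q" if pP: "p \<in> P" and pts: "obj p = ts" for p
  proof -
    have pge: "\<forall>k. p$k \<ge> ts * gamma$k * ((V *v p)$k + z$k)"
      using obj_ge(1)[OF V_nonneg gamma_pos z_pos, of p ts] P0 pP pts unfolding obj_def by simp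
    define x where "x = p - q"
    have Vx: "(V *v x)$k = (V *v p)$k - (V *v q)$k" for k unfolding x_def by (simp add: Vdiff)
    have xge: "\<forall>k. x$k \<ge> ts * gamma$k * (V *v x)$k"
    proof
      fix k
      have "x$k = p$k - q$k" unfolding x_def by simp
      also have "\<dots> \<ge> ts * gamma$k * ((V *v p)$k + z$k) - ts * gamma$k * ((V *v q)$k + z$k)"
        using pge[rule_format, of k] qeq[rule_format, of k] by linarith
      finally show "x$k \<ge> ts * gamma$k * (V *v x)$k" unfolding Vx by (simp add: algebra_simps)
    qed
    have x0: "\<forall>k. x$k \<ge> 0" using mono xge by blast
    show "p = q"
    proof (cases "\<forall>k. p$k = ts * gamma$k * ((V *v p)$k + z$k)")
      case True
      have "\<forall>k. x$k = ts * gamma$k * (V *v x)$k"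
      proof
        fix k
        show "x$k = ts * gamma$k * (V *v x)$k"
          using True[rule_format, of k] qeq[rule_format, of k] unfolding Vx
          by (simp add: x_def algebra_simps)
      qed
      hence "\<forall>k. (-x)$k \<ge> 0" using mono[of "-x"] by (simp add: Vneg)
      hence "x = 0" using x0 by (simp add: vec_eq_iff order_antisym)
      thus ?thesis unfolding x_def by simp
    next
      case False
      then obtain m where m: "p$m \<noteq> ts * gamma$m * ((V *v p)$m + z$m)" by blast
      define c :: "real^'k" where "c = (\<chi> k. p$k - ts * gamma$k * ((V *v p)$k + z$k))"
      have c0: "\<forall>k. c$k \<ge> 0" using pge unfolding c_def by simp
      have cm: "c$m > 0" using pge m unfolding c_def by (simp add: order_le_neq_trans)
      have xc: "\<forall>k. x$k \<ge> ts * gamma$k * (V *v x)$k + c$k"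
      proof
        fix k
        show "x$k \<ge> ts * gamma$k * (V *v x)$k + c$k"
          using qeq[rule_format, of k] unfolding c_def Vx x_def by (simp add: algebra_simps)
      qed
      have xpos: "\<forall>k. x$k > 0"
        using irr_lemma[OF V_nonneg gamma_pos tspos V_irr x0 xc c0 cm] by blast
      have Cq0: "(C *v q)$i \<ge> 0" for i
        unfolding matrix_vector_mult_def using Cnn q0 by (simp add: sum_nonneg)
      have strict: "(C *v q)$i < phat$i" for i
      proof (cases "\<exists>j. C$i$j = 1")
        case True
        then obtain j where j: "C$i$j = 1" by blast
        have "(C *v x)$i = (\<Sum>l\<in>UNIV. C$i$l * x$l)" by (simp add: matrix_vector_mult_def)
        also have "\<dots> \<ge> C$i$j * x$j"
          by (rule member_le_sum) (use Cnn x0 in auto)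
        finally have "(C *v x)$i \<ge> C$i$j * x$j" .
        hence "(C *v x)$i > 0" using j xpos[rule_format, of j] by simp
        moreover have "(C *v x)$i = (C *v p)$i - (C *v q)$i"
          unfolding x_def by (simp add: matrix_vector_mult_diff_distrib)
        moreover have "(C *v p)$i \<le> phat$i" using pP unfolding P_def power_set_def by auto
        ultimately show ?thesis by linarith
      next
        case False
        hence "\<forall>j. C$i$j = 0" using C01 by blast
        hence "(C *v q)$i = 0" by (simp add: matrix_vector_mult_def)
        thus ?thesis using phat_pos by simp
      qed
      define mu where "mu i = ((C *v q)$i + phat$i) / 2" for i
      define lams where "lams i = phat$i / mu i" for i
      define lam where "lam = Min (range lams)"
      have mupos: "mu i > 0" for i unfolding mu_def using Cq0[of i] phat_pos[rule_format, of i] by simp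
      have lams1: "lams i > 1" for i
        unfolding lams_def using mupos[of i] strict[of i] by (simp add: less_divide_eq_1_pos mu_def)
      have lam1: "lam > 1" unfolding lam_def using lams1 by (simp add: Min_gr_iff)
      have lamle: "lam * (C *v q)$i \<le> phat$i" for i
      proof -
        have "lam \<le> lams i" unfolding lam_def by simp
        hence "lam * (C *v q)$i \<le> lams i * (C *v q)$i" using Cq0[of i] by (simp add: mult_right_mono)
        also have "\<dots> \<le> lams i * mu i"
          using lams1[of i] strict[of i] unfolding mu_def by (intro mult_left_mono) auto
        also have "\<dots> = phat$i" unfolding lams_def using mupos[of i] by simp
        finally show ?thesis .
      qed
      define lq where "lq = lam *\<^sub>R q"
      have lqP: "lq \<in> P" unfolding P_def power_set_def lq_def
        using q0 lam1 lamle by (simp add: matrix_vector_mult_scaleR)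
      have "obj lq > ts" unfolding obj_def
      proof (subst obj_ge(2)[OF V_nonneg gamma_pos z_pos], goal_cases)
        case 1 show ?case using q0 lam1 unfolding lq_def by simp
      next
        case 2 show ?case
        proof
          fix k
          define w where "w = ts * gamma$k"
          have wz: "w * z$k > 0" unfolding w_def using tspos gamma_pos z_pos by simp
          have "(lam - 1) * (w * z$k) > 0" using lam1 wz by simp
          moreover have "lq$k = w * ((V *v lq)$k + z$k) + (lam - 1) * (w * z$k)"
            unfolding lq_def Vscale using qeq[rule_format, of k] unfolding w_def
            by (simp add: algebra_simps)
          ultimately show "lq$k > ts * gamma$k * ((V *v lq)$k + z$k)" unfolding w_def by linarith
        qed
      qed
      moreover have "obj lq \<le> ts" using psmax lqP unfolding ts_def by blast
      ultimately show ?thesis by linarith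
    qed
  qed
  have psq: "ps = q" using core ps unfolding ts_def by blast
  show ?thesis
  proof (rule exI[of _ ps], intro conjI)
    show "ps \<in> power_set C phat" using ps unfolding P_def .
    show "\<forall>p\<in>power_set C phat. balance_obj V z gamma p \<le> balance_obj V z gamma ps"
      using psmax unfolding P_def obj_def .
    show "\<forall>q'. q' \<in> power_set C phat \<and>
           (\<forall>p\<in>power_set C phat. balance_obj V z gamma p \<le> balance_obj V z gamma q') \<longrightarrow> q' = ps"
    proof (intro allI impI)
      fix q' assume h: "q' \<in> power_set C phat \<and>
           (\<forall>p\<in>power_set C phat. balance_obj V z gamma p \<le> balance_obj V z gamma q')"
      hence "obj q' = ts" using psmax ps unfolding P_def obj_def ts_def by (meson order_antisym)
      thus "q' = ps" using core h psq unfolding P_def by blast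
    qed
    show "\<forall>k. 0 < ps $ k" using qpos psq by simp
    show "\<exists>t'>0. (\<exists>p\<in>power_set C phat. ((1 / t') *\<^sub>R mat 1 - diag_mat gamma ** V) *v p = diag_mat gamma *v z) \<and>
          (\<forall>t. 0 < t \<and> (\<exists>p\<in>power_set C phat. ((1 / t) *\<^sub>R mat 1 - diag_mat gamma ** V) *v p = diag_mat gamma *v z) \<longrightarrow> t \<le> t') \<and>
          invertible ((1 / t') *\<^sub>R mat 1 - diag_mat gamma ** V) \<and>
          ps = matrix_inv ((1 / t') *\<^sub>R mat 1 - diag_mat gamma ** V) *v (diag_mat gamma *v z)"
    proof (rule exI[of _ ts], intro conjI)
      show "ts > 0" by (rule tspos)
      show "\<exists>p\<in>power_set C phat. ((1 / ts) *\<^sub>R mat 1 - diag_mat gamma ** V) *v p = diag_mat gamma *v z"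
        using ps psq inv_mv[OF invM] unfolding P_def q_def M_def by blast
      show "\<forall>t. 0 < t \<and> (\<exists>p\<in>power_set C phat. ((1 / t) *\<^sub>R mat 1 - diag_mat gamma ** V) *v p = diag_mat gamma *v z) \<longrightarrow> t \<le> ts"
      proof (intro allI impI, elim conjE bexE)
        fix t p assume t: "0 < t" and pP: "p \<in> power_set C phat"
          and e: "((1 / t) *\<^sub>R mat 1 - diag_mat gamma ** V) *v p = diag_mat gamma *v z"
        have "\<forall>k. p$k = t * gamma$k * ((V *v p)$k + z$k)" using e Meq[OF t] by blast
        hence pe: "\<forall>k. p$k \<ge> t * gamma$k * ((V *v p)$k + z$k)" by simp
        have p0: "\<forall>k. p$k \<ge> 0" using P0 pP unfolding P_def by blast
        have "t \<le> obj p" unfolding obj_def using obj_ge(1)[OF V_nonneg gamma_pos z_pos p0, of t] pe by blast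
        also have "\<dots> \<le> ts" using psmax pP unfolding P_def ts_def by blast
        finally show "t \<le> ts" .
      qed
      show "invertible ((1 / ts) *\<^sub>R mat 1 - diag_mat gamma ** V)" using invM unfolding M_def .
      show "ps = matrix_inv ((1 / ts) *\<^sub>R mat 1 - diag_mat gamma ** V) *v (diag_mat gamma *v z)"
        using psq unfolding q_def M_def .
    qed
  qed
qed


end
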